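(* Let $H$ be a connected edge-weighted graph with a $w$-gridtree $\mathcal{T}$. Let $\eta$ and $\eta'$ be columns such that $\eta$ is an ancestor of $\eta'$ in $\mathcal{T}$ and the path between them in $\mathcal{T}$ contains exactly $m$ columns strictly between $\eta$ and $\eta'$. Then every path $P$ in $H$ from a vertex $u\in\eta$ to a vertex $v\in V(H_{\eta'})$ has length at least $m\cdot w$.
   Context: A $w$-gridtree for a connected edge-weighted graph $H$ consists of a partition of $V(H)$ into disjoint subsets, each designated either a column or a leftover set, together with a rooted tree $\mathcal{T}$ whose nodes are in one-to-one correspondence with the columns and whose edges are in one-to-one correspondence with the leftover sets, satisfying: (Column adjacency) For every edge $(u,v)$ of $H$: either $u,v$ lie in the same subset, or $u,v$ lie in columns adjacent in $\mathcal{T}$, or one lies in a column $\eta$ and the other in a leftover set whose edge of $\mathcal{T}$ is incident to $\eta$. (Column width) For a column $\eta$, every other column and every edge of $\mathcal{T}$ is either below $\eta$ (in the subtree of $\mathcal{T}$ rooted at $\eta$; for edges, both endpoints in that subtree) or above $\eta$ (otherwise); a vertex is above/below $\eta$ if its column or leftover set is. If $a\in\eta$ is adjacent in $H$ to a vertex above $\eta$, $b$ is a vertex below $\eta$, and $P$ is a path in $H$ from $a$ to $b$, then $P$ has length at least $w$. (Column shortcut) For a column $\eta$, let $H_\eta$ be the subgraph of $H$ induced by $\eta$, all columns below $\eta$, and all leftover sets below $\eta$ or incident to $\eta$. There is a shortest path $\pi_\eta$ of $H_\eta$ such that every vertex of $\eta$ is within distance $2w$ of $\pi_\eta$ in the induced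 subgraph $H[\eta]$. *)

theory Defs
  imports Complex_Main
begin

definition wgraph :: "'v set \<Rightarrow> ('v \<times> 'v) set \<Rightarrow> ('v \<Rightarrow> 'v \<Rightarrow> real) \<Rightarrow> bool" where
  "wgraph V E wt \<longleftrightarrow> finite V \<and> E \<subseteq> V \<times> V \<and> (\<forall>u v. (u, v) \<in> E \<longrightarrow> (v, u) \<in> E)
     \<and> (\<forall>u. (u, u) \<notin> E) \<and> (\<forall>u v. (u, v) \<in> E \<longrightarrow> wt u v = wt v u \<and> wt u v > 0)"

definition is_path :: "('v \<times> 'v) set \<Rightarrow> 'v set \<Rightarrow> 'v list \<Rightarrow> bool" where
  "is_path E S p \<longleftrightarrow> p \<noteq> [] \<and> set p \<subseteq> S \<and> distinct p
     \<and> (\<forall>i. Suc i < length p \<longrightarrow> (p ! i, p ! Suc i) \<in> E)"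

definition path_len :: "('v \<Rightarrow> 'v \<Rightarrow> real) \<Rightarrow> 'v list \<Rightarrow> real" where
  "path_len wt p = (\<Sum>i<length p - 1. wt (p ! i) (p ! Suc i))"

definition connected_graph :: "'v set \<Rightarrow> ('v \<times> 'v) set \<Rightarrow> bool" where
  "connected_graph V E \<longleftrightarrow> (\<forall>u\<in>V. \<forall>v\<in>V. \<exists>p. is_path E V p \<and> hd p = u \<and> last p = v)"

text \<open>The rooted tree \<T> has node set N (indexed by an abstract type), root r and
parent function par (with par r = r).  The tree edges are
the pairs (c, par c) for c \<in> N - {r}; the leftover set of that edge is lo c.\<close>

definition rooted_tree :: "'n set \<Rightarrow> ('n \<Rightarrow> 'n) \<Rightarrow> 'n \<Rightarrow> bool" where
  "rooted_tree N par r \<longleftrightarrow> finite N \<and> r \<in> N \<and> par r = r \<and> (\<forall>c\<in>N. par c \<in> N)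
     \<and> (\<forall>c\<in>N. \<exists>k. (par ^^ k) c = r)"

definition desc :: "('n \<Rightarrow> 'n) \<Rightarrow> 'n \<Rightarrow> 'n \<Rightarrow> bool" where
  "desc par n c \<longleftrightarrow> (\<exists>k. (par ^^ k) c = n)"

text \<open>Vertex x is below column n: it lies in a column strictly below n, or in the
leftover set of a tree edge (c, par c) with both endpoints in the subtree of n,
i.e. c a strict descendant of n.\<close>
definition below_v :: "'n set \<Rightarrow> ('n \<Rightarrow> 'n) \<Rightarrow> 'n \<Rightarrow> ('n \<Rightarrow> 'v set) \<Rightarrow> ('n \<Rightarrow> 'v set)
    \<Rightarrow> 'n \<Rightarrow> 'v \<Rightarrow> bool" where
  "below_v N par r col lo n x \<longleftrightarrow>
     (\<exists>c\<in>N. c \<noteq> n \<and> desc par n c \<and> x \<in> col c)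
   \<or> (\<exists>c\<in>N - {r}. c \<noteq> n \<and> desc par n c \<and> x \<in> lo c)"

definition above_v :: "'n set \<Rightarrow> ('n \<Rightarrow> 'n) \<Rightarrow> 'n \<Rightarrow> ('n \<Rightarrow> 'v set) \<Rightarrow> ('n \<Rightarrow> 'v set)
    \<Rightarrow> 'n \<Rightarrow> 'v \<Rightarrow> bool" where
  "above_v N par r col lo n x \<longleftrightarrow>
     (\<exists>c\<in>N. c \<noteq> n \<and> \<not> desc par n c \<and> x \<in> col c)
   \<or> (\<exists>c\<in>N - {r}. \<not> (c \<noteq> n \<and> desc par n c) \<and> x \<in> lo c)"

text \<open>Vertex set of H_\<eta>: the column n, all columns below n, all leftover sets below n
and the leftover sets of tree edges incident to n (the edge to the parent; edges to
children are below n anyway).\<close>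
definition sub_vs :: "'n set \<Rightarrow> ('n \<Rightarrow> 'n) \<Rightarrow> 'n \<Rightarrow> ('n \<Rightarrow> 'v set) \<Rightarrow> ('n \<Rightarrow> 'v set)
    \<Rightarrow> 'n \<Rightarrow> 'v set" where
  "sub_vs N par r col lo n =
     (\<Union>c\<in>{c\<in>N. desc par n c}. col c) \<union> (\<Union>c\<in>{c\<in>N - {r}. desc par n c}. lo c)"

definition gridtree ::
  "'v set \<Rightarrow> ('v \<times> 'v) set \<Rightarrow> ('v \<Rightarrow> 'v \<Rightarrow> real) \<Rightarrow> real
   \<Rightarrow> 'n set \<Rightarrow> ('n \<Rightarrow> 'n) \<Rightarrow> 'n \<Rightarrow> ('n \<Rightarrow> 'v set) \<Rightarrow> ('n \<Rightarrow> 'v set) \<Rightarrow> bool" where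
  "gridtree V E wt w N par r col lo \<longleftrightarrow>
     rooted_tree N par r
     \<comment> \<open>partition of V into the columns and the leftover sets\<close>
   \<and> V = (\<Union>c\<in>N. col c) \<union> (\<Union>c\<in>N - {r}. lo c)
   \<and> (\<forall>c\<in>N. \<forall>d\<in>N. c \<noteq> d \<longrightarrow> col c \<inter> col d = {})
   \<and> (\<forall>c\<in>N - {r}. \<forall>d\<in>N - {r}. c \<noteq> d \<longrightarrow> lo c \<inter> lo d = {})
   \<and> (\<forall>c\<in>N. \<forall>d\<in>N - {r}. col c \<inter> lo d = {})
     \<comment> \<open>column adjacency\<close>
   \<and> (\<forall>u v. (u, v) \<in> E \<longrightarrow>
         (\<exists>c\<in>N. u \<in> col c \<and> v \<in> col c)
       \<or> (\<exists>c\<in>N - {r}. u \<in> lo c \<and> v \<in> lo c)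
       \<or> (\<exists>c\<in>N - {r}. (u \<in> col c \<and> v \<in> col (par c)) \<or> (v \<in> col c \<and> u \<in> col (par c)))
       \<or> (\<exists>c\<in>N - {r}. \<exists>d\<in>{c, par c}. (u \<in> col d \<and> v \<in> lo c) \<or> (v \<in> col d \<and> u \<in> lo c)))
     \<comment> \<open>column width\<close>
   \<and> (\<forall>n\<in>N. \<forall>a\<in>col n. \<forall>x b p.
         (a, x) \<in> E \<and> above_v N par r col lo n x \<and> below_v N par r col lo n b
         \<and> is_path E V p \<and> hd p = a \<and> last p = b \<longrightarrow> path_len wt p \<ge> w)
     \<comment> \<open>column shortcut\<close>
   \<and> (\<forall>n\<in>N. \<exists>\<pi>. is_path E (sub_vs N par r col lo n) \<pi>
         \<and> (\<forall>p. is_path E (sub_vs N par r col lo n) p \<and> hd p = hd \<pi> \<and> last p = last \<pi>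
               \<longrightarrow> path_len wt \<pi> \<le> path_len wt p)
         \<and> (\<forall>x\<in>col n. \<exists>q. is_path E (col n) q \<and> hd q = x \<and> last q \<in> set \<pi>
               \<and> path_len wt q \<le> 2 * w))"

end

theory Submission
  imports Defs
begin

lemma funpow_fix: "par r = r \<Longrightarrow> (par ^^ k) r = r"
  by (induction k) auto

lemma funpow_N: "\<forall>c\<in>N. par c \<in> N \<Longrightarrow> x \<in> N \<Longrightarrow> (par ^^ k) x \<in> N"
  by (induction k) auto

lemma funpow_mult_fix: "(par ^^ Suc p) x = x \<Longrightarrow> (par ^^ (Suc p * t)) x = x"
proof (induction t)
  case 0 then show ?case by simp
next
  case (Suc t)
  have "(par ^^ (Suc p * Suc t)) x = (par ^^ Suc p) ((par ^^ (Suc p * t)) x)"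
    by (simp only: mult_Suc_right funpow_add comp_apply)
  then show ?case using Suc by simp
qed

lemma cycle_root:
  assumes R: "rooted_tree N par r" and x: "x \<in> N" and c: "(par ^^ Suc p) x = x"
  shows "x = r"
proof -
  obtain k where k: "(par ^^ k) x = r" using R x unfolding rooted_tree_def by blast
  have pr: "par r = r" using R unfolding rooted_tree_def by blast
  have ge: "Suc p * k \<ge> k" by simp
  have "(par ^^ (Suc p * k)) x = (par ^^ (Suc p * k - k)) ((par ^^ k) x)"
    using ge by (metis funpow_add comp_apply le_add_diff_inverse2)
  also have "\<dots> = r" using k funpow_fix[of par r, OF pr] by simp
  finally show ?thesis using funpow_mult_fix[OF c] by simp
qed

lemma SB_step:
  assumes R: "rooted_tree N par r" and c: "c \<in> N" "c \<noteq> r" and cj: "cj \<in> N"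
  shows "(c \<noteq> cj \<and> desc par cj c) \<longleftrightarrow> (par c = cj \<or> (par c \<noteq> cj \<and> desc par cj (par c)))"
proof
  assume a: "c \<noteq> cj \<and> desc par cj c"
  then obtain k where k: "(par ^^ k) c = cj" unfolding desc_def by blast
  with a obtain k' where "k = Suc k'" by (cases k) auto
  then have "(par ^^ k') (par c) = cj" using k by (simp add: funpow_Suc_right del: funpow.simps)
  then show "par c = cj \<or> (par c \<noteq> cj \<and> desc par cj (par c))" unfolding desc_def by blast
next
  assume b: "par c = cj \<or> (par c \<noteq> cj \<and> desc par cj (par c))"
  have pr: "par r = r" using R unfolding rooted_tree_def by blast
  show "c \<noteq> cj \<and> desc par cj c"
  proof (cases "par c = cj")
    case True
    have "c \<noteq> cj"
    proof
      assume "c = cj"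
      then have "(par ^^ Suc 0) c = c" using True by simp
      then show False using cycle_root[OF R c(1)] c(2) by blast
    qed
    moreover have "(par ^^ 1) c = cj" using True by simp
    ultimately show ?thesis unfolding desc_def by blast
  next
    case False
    with b obtain k where k: "(par ^^ k) (par c) = cj" unfolding desc_def by blast
    then have k2: "(par ^^ Suc k) c = cj" by (simp add: funpow_Suc_right del: funpow.simps)
    have "c \<noteq> cj"
    proof
      assume "c = cj"
      then have "cj = r" using cycle_root[OF R cj] k2 by blast
      then show False using False pr \<open>c = cj\<close> by simp
    qed
    then show ?thesis using k2 unfolding desc_def by blast
  qed
qed

lemma excl:
  assumes G: "gridtree V E wt w N par r col lo" 
    and a: "above_v N par r col lo cj x" and b: "below_v N par r col lo cj x"
  shows False
proof -
  have d1: "\<forall>c\<in>N. \<forall>d\<in>N. c \<noteq> d \<longrightarrow> col c \<inter> col d = {}"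
   and d2: "\<forall>c\<in>N - {r}. \<forall>d\<in>N - {r}. c \<noteq> d \<longrightarrow> lo c \<inter> lo d = {}"
   and d3: "\<forall>c\<in>N. \<forall>d\<in>N - {r}. col c \<inter> lo d = {}"
    using G unfolding gridtree_def by blast+
  show False using a b unfolding above_v_def below_v_def
    by (elim disjE bexE conjE; (metis DiffD1 IntI d1 d2 d3 empty_iff))
qed

lemma cover:
  assumes G: "gridtree V E wt w N par r col lo" and x: "x \<in> V"
    and a: "\<not> above_v N par r col lo cj x" and b: "\<not> below_v N par r col lo cj x"
  shows "x \<in> col cj"
proof -
  have "V = (\<Union>c\<in>N. col c) \<union> (\<Union>c\<in>N - {r}. lo c)" using G unfolding gridtree_def by blast
  then show ?thesis using x a b unfolding above_v_def below_v_def by auto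
qed

lemma colmem:
  assumes G: "gridtree V E wt w N par r col lo" and c: "c \<in> N" and x: "x \<in> col c"
  shows "above_v N par r col lo cj x \<longleftrightarrow> (c \<noteq> cj \<and> \<not> desc par cj c)"
    and "below_v N par r col lo cj x \<longleftrightarrow> (c \<noteq> cj \<and> desc par cj c)"
proof -
  have d1: "\<forall>c\<in>N. \<forall>d\<in>N. c \<noteq> d \<longrightarrow> col c \<inter> col d = {}"
   and d3: "\<forall>c\<in>N. \<forall>d\<in>N - {r}. col c \<inter> lo d = {}"
    using G unfolding gridtree_def by blast+
  have e1: "\<And>d. d \<in> N \<Longrightarrow> x \<in> col d \<Longrightarrow> d = c" using d1 c x by blast
  have e2: "\<And>d. d \<in> N - {r} \<Longrightarrow> x \<in> lo d \<Longrightarrow> False" using d3 c x by blast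
  show "above_v N par r col lo cj x \<longleftrightarrow> (c \<noteq> cj \<and> \<not> desc par cj c)"
    unfolding above_v_def using e1 e2 c x by metis
  show "below_v N par r col lo cj x \<longleftrightarrow> (c \<noteq> cj \<and> desc par cj c)"
    unfolding below_v_def using e1 e2 c x by metis
qed

lemma lomem:
  assumes G: "gridtree V E wt w N par r col lo" and c: "c \<in> N - {r}" and x: "x \<in> lo c"
  shows "above_v N par r col lo cj x \<longleftrightarrow> \<not> (c \<noteq> cj \<and> desc par cj c)"
    and "below_v N par r col lo cj x \<longleftrightarrow> (c \<noteq> cj \<and> desc par cj c)"
proof -
  have d2: "\<forall>c\<in>N - {r}. \<forall>d\<in>N - {r}. c \<noteq> d \<longrightarrow> lo c \<inter> lo d = {}"
   and d3: "\<forall>c\<in>N. \<forall>d\<in>N - {r}. col c \<inter> lo d = {}"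
    using G unfolding gridtree_def by blast+
  have e1: "\<And>d. d \<in> N - {r} \<Longrightarrow> x \<in> lo d \<Longrightarrow> d = c" using d2 c x by blast
  have e2: "\<And>d. d \<in> N \<Longrightarrow> x \<in> col d \<Longrightarrow> False" using d3 c x by blast
  show "above_v N par r col lo cj x \<longleftrightarrow> \<not> (c \<noteq> cj \<and> desc par cj c)"
    unfolding above_v_def using e1 e2 c x by metis
  show "below_v N par r col lo cj x \<longleftrightarrow> (c \<noteq> cj \<and> desc par cj c)"
    unfolding below_v_def using e1 e2 c x by metis
qed

lemma no_edge:
  assumes G: "gridtree V E wt w N par r col lo" and cj: "cj \<in> N" and e: "(x, y) \<in> E"
    and a: "above_v N par r col lo cj x" and b: "below_v N par r col lo cj y"
  shows False
proof -
  have R: "rooted_tree N par r" using G unfolding gridtree_def by blast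
  have pN: "\<forall>c\<in>N. par c \<in> N" using R unfolding rooted_tree_def by blast
  have SB: "\<And>c. c \<in> N - {r} \<Longrightarrow> (c \<noteq> cj \<and> desc par cj c) \<longleftrightarrow> (par c = cj \<or> (par c \<noteq> cj \<and> desc par cj (par c)))"
    using SB_step[OF R _ _ cj] by blast
  have adj: "(\<exists>c\<in>N. x \<in> col c \<and> y \<in> col c)
       \<or> (\<exists>c\<in>N - {r}. x \<in> lo c \<and> y \<in> lo c)
       \<or> (\<exists>c\<in>N - {r}. (x \<in> col c \<and> y \<in> col (par c)) \<or> (y \<in> col c \<and> x \<in> col (par c)))
       \<or> (\<exists>c\<in>N - {r}. \<exists>d\<in>{c, par c}. (x \<in> col d \<and> y \<in> lo c) \<or> (y \<in> col d \<and> x \<in> lo c))"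
    using G e unfolding gridtree_def by blast
  then show False
  proof (elim disjE bexE)
    fix c assume c: "c \<in> N" and h: "x \<in> col c \<and> y \<in> col c"
    show False using colmem[OF G c, of x cj] colmem[OF G c, of y cj] a b h by blast
  next
    fix c assume c: "c \<in> N - {r}" and h: "x \<in> lo c \<and> y \<in> lo c"
    show False using lomem[OF G c, of x cj] lomem[OF G c, of y cj] a b h by blast
  next
    fix c assume c: "c \<in> N - {r}" and h: "x \<in> col c \<and> y \<in> col (par c)"
    have pc: "par c \<in> N" using c pN by blast
    have cN: "c \<in> N" using c by blast
    show False using colmem[OF G cN, of x cj] colmem[OF G pc, of y cj] a b h SB[OF c] by blast
  next
    fix c assume c: "c \<in> N - {r}" and h: "y \<in> col c \<and> x \<in> col (par c)"
    have pc: "par c \<in> N" using c pN by blast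
    have cN: "c \<in> N" using c by blast
    show False using colmem[OF G cN, of y cj] colmem[OF G pc, of x cj] a b h SB[OF c] by blast
  next
    fix c d assume c: "c \<in> N - {r}" and dd: "d \<in> {c, par c}" and h: "x \<in> col d \<and> y \<in> lo c"
    have pc: "par c \<in> N" using c pN by blast
    have dN: "d \<in> N" using dd c pc by blast
    show False using colmem[OF G dN, of x cj] lomem[OF G c, of y cj] a b h SB[OF c] dd by blast
  next
    fix c d assume c: "c \<in> N - {r}" and dd: "d \<in> {c, par c}" and h: "y \<in> col d \<and> x \<in> lo c"
    have pc: "par c \<in> N" using c pN by blast
    have dN: "d \<in> N" using dd c pc by blast
    show False using colmem[OF G dN, of y cj] lomem[OF G c, of x cj] a b h SB[OF c] dd by blast
  qed
qed

lemma segment: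
  assumes G: "gridtree V E wt w N par r col lo" and WG: "wgraph V E wt" and cj: "cj \<in> N"
    and P: "is_path E V P"
    and A: "above_v N par r col lo cj (hd P)" and B: "below_v N par r col lo cj (last P)"
  shows "w \<le> (\<Sum>k\<in>{k. Suc k < length P \<and> P ! k \<in> col cj}. wt (P ! k) (P ! Suc k))"
proof -
  define L where "L = length P"
  have Pne: "P \<noteq> []" and PV: "set P \<subseteq> V" and Pd: "distinct P"
    and Pe: "\<And>i. Suc i < L \<Longrightarrow> (P ! i, P ! Suc i) \<in> E"
    using P unfolding is_path_def L_def by auto
  have L0: "L > 0" using Pne L_def by simp
  have hd0: "hd P = P ! 0" using Pne by (simp add: hd_conv_nth)
  have lastL: "last P = P ! (L - 1)" using Pne L_def by (simp add: last_conv_nth)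
  define Bp where "Bp = (\<lambda>t. t < L \<and> below_v N par r col lo cj (P ! t))"
  define t where "t = (LEAST t. Bp t)"
  have tB: "Bp t" unfolding t_def by (rule LeastI[of _ "L - 1"]) (use B lastL L0 in \<open>simp add: Bp_def\<close>)
  have tmin: "\<And>k. k < t \<Longrightarrow> \<not> below_v N par r col lo cj (P ! k)"
  proof -
    fix k assume "k < t"
    then have "\<not> Bp k" unfolding t_def by (rule not_less_Least)
    then show "\<not> below_v N par r col lo cj (P ! k)" using \<open>k < t\<close> tB Bp_def by auto
  qed
  have tL: "t < L" and tbel: "below_v N par r col lo cj (P ! t)" using tB Bp_def by auto
  have t0: "t \<noteq> 0" using tbel A hd0 excl[OF G] by metis
  define Ap where "Ap = (\<lambda>i. i < t \<and> above_v N par r col lo cj (P ! i))"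
  define i where "i = (GREATEST i. Ap i)"
  have iA: "Ap i" unfolding i_def
    by (rule GreatestI_nat[of _ 0 t]) (use A hd0 t0 in \<open>auto simp: Ap_def\<close>)
  have imax: "\<And>k. i < k \<Longrightarrow> k < t \<Longrightarrow> \<not> above_v N par r col lo cj (P ! k)"
  proof -
    fix k assume "i < k" "k < t"
    have "\<not> Ap k"
    proof
      assume "Ap k"
      then have "k \<le> i" unfolding i_def by (rule Greatest_le_nat[of _ _ t]) (auto simp: Ap_def)
      then show False using \<open>i < k\<close> by simp
    qed
    then show "\<not> above_v N par r col lo cj (P ! k)" using \<open>k < t\<close> Ap_def by auto
  qed
  have it: "i < t" and iab: "above_v N par r col lo cj (P ! i)" using iA Ap_def by auto
  have "Suc i \<noteq> t"
  proof
    assume "Suc i = t"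
    then have "(P ! i, P ! t) \<in> E" using Pe tL by auto
    then show False using no_edge[OF G cj] iab tbel by blast
  qed
  then have sit: "Suc i < t" using it by simp
  have mid: "\<And>k. i < k \<Longrightarrow> k < t \<Longrightarrow> P ! k \<in> col cj"
  proof -
    fix k assume k: "i < k" "k < t"
    have "P ! k \<in> V" using PV k tL L_def by (metis less_trans nth_mem subsetD)
    then show "P ! k \<in> col cj" using cover[OF G] imax[OF k] tmin[OF k(2)] by blast
  qed
  define q where "q = take (t - i) (drop (Suc i) P)"
  have lq: "length q = t - i" using tL it L_def unfolding q_def by auto
  have qn: "\<And>k. k < t - i \<Longrightarrow> q ! k = P ! (Suc i + k)" using tL it L_def unfolding q_def by auto
  have qpath: "is_path E V q"
    unfolding is_path_def
  proof (intro conjI allI impI)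
    show "q \<noteq> []" using lq it by auto
    show "set q \<subseteq> V" using PV unfolding q_def by (meson order.trans set_drop_subset set_take_subset)
    show "distinct q" using Pd unfolding q_def by simp
    fix k assume "Suc k < length q"
    then show "(q ! k, q ! Suc k) \<in> E" using qn lq Pe tL by (simp add: add.commute) 
  qed
  have hq: "hd q = P ! Suc i"
  proof -
    have "q \<noteq> []" using lq it by auto
    then have "hd q = q ! 0" by (simp add: hd_conv_nth)
    then show ?thesis using qn[of 0] it by simp
  qed
  have lq2: "last q = P ! t"
  proof -
    have "last q = q ! (t - i - 1)" using lq it by (metis last_conv_nth length_0_conv zero_less_diff diff_less_mono less_irrefl_nat)
    also have "\<dots> = P ! t" using qn it by simp
    finally show ?thesis .
  qed
  have eSym: "(P ! Suc i, P ! i) \<in> E" using Pe[of i] sit tL WG unfolding wgraph_def by auto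
  have width: "\<forall>n\<in>N. \<forall>a\<in>col n. \<forall>x b p.
         (a, x) \<in> E \<and> above_v N par r col lo n x \<and> below_v N par r col lo n b
         \<and> is_path E V p \<and> hd p = a \<and> last p = b \<longrightarrow> path_len wt p \<ge> w"
    using G unfolding gridtree_def by blast
  have w1: "w \<le> path_len wt q"
    using width cj mid[of "Suc i"] sit eSym iab tbel qpath hq lq2 by blast
  have "path_len wt q = (\<Sum>k<t - i - 1. wt (P ! (Suc i + k)) (P ! Suc (Suc i + k)))"
    unfolding path_len_def lq using qn by (intro sum.cong) auto
  also have "\<dots> = (\<Sum>k\<in>{Suc i..<t}. wt (P ! k) (P ! Suc k))"
  proof -
    have "{Suc i..<t} = (\<lambda>k. Suc i + k) ` {..<t - i - 1}"
    proof (intro equalityI subsetI)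
      fix x assume "x \<in> {Suc i..<t}"
      then have "x = Suc i + (x - Suc i)" "x - Suc i \<in> {..<t - i - 1}" by auto
      then show "x \<in> (\<lambda>k. Suc i + k) ` {..<t - i - 1}" by (metis image_eqI)
    qed auto
    moreover have "inj_on (\<lambda>k. Suc i + k) {..<t - i - 1}" by (simp add: inj_on_def)
    ultimately show ?thesis by (simp add: sum.reindex)
  qed
  also have "\<dots> \<le> (\<Sum>k\<in>{k. Suc k < length P \<and> P ! k \<in> col cj}. wt (P ! k) (P ! Suc k))"
  proof (rule sum_mono2)
    show "finite {k. Suc k < length P \<and> P ! k \<in> col cj}"
      by (rule finite_subset[of _ "{..<length P}"]) auto
    show "{Suc i..<t} \<subseteq> {k. Suc k < length P \<and> P ! k \<in> col cj}" using mid tL L_def by auto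
    fix b assume "b \<in> {k. Suc k < length P \<and> P ! k \<in> col cj} - {Suc i..<t}"
    then have "(P ! b, P ! Suc b) \<in> E" using Pe L_def by auto
    then show "0 \<le> wt (P ! b) (P ! Suc b)" using WG unfolding wgraph_def by (meson less_le)
  qed
  finally show ?thesis using w1 by linarith
qed

theorem claim5p2:
  fixes V :: "'v set" and E :: "('v \<times> 'v) set" and wt :: "'v \<Rightarrow> 'v \<Rightarrow> real" and w :: real
    and N :: "'n set" and par :: "'n \<Rightarrow> 'n" and r :: 'n and col lo :: "'n \<Rightarrow> 'v set"
    and n n' :: 'n and m :: nat and u v :: 'v and P :: "'v list"
  assumes "wgraph V E wt"
    and "connected_graph V E"
    and "gridtree V E wt w N par r col lo"
    and "n \<in> N" and "n' \<in> N"
    and "(par ^^ Suc m) n' = n"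
    and "\<forall>j\<le>m. (par ^^ j) n' \<noteq> n"
    and "u \<in> col n"
    and "v \<in> sub_vs N par r col lo n'"
    and "is_path E V P" and "hd P = u" and "last P = v"
  shows "path_len wt P \<ge> real m * w"
proof -
  note WG = assms(1) and G = assms(3) and nN = assms(4) and n'N = assms(5)
    and chain = assms(6) and neq = assms(7) and uc = assms(8) and vs = assms(9)
    and P = assms(10) and hdP = assms(11) and lastP = assms(12)
  have R: "rooted_tree N par r" using G unfolding gridtree_def by blast
  have pN: "\<forall>c\<in>N. par c \<in> N" and pr: "par r = r" using R unfolding rooted_tree_def by blast+
  define c where "c = (\<lambda>j. (par ^^ j) n')"
  have cN: "\<And>j. c j \<in> N" unfolding c_def using funpow_N[OF pN n'N] by blast
  have cnr: "\<And>j. j \<le> m \<Longrightarrow> c j \<noteq> r"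
  proof
    fix j assume j: "j \<le> m" "c j = r"
    have "n = (par ^^ (Suc m - j)) (c j)" unfolding c_def using chain j(1)
      by (metis funpow_add comp_apply le_add_diff_inverse2 le_SucI)
    then have "n = c j" using j(2) funpow_fix[of par r, OF pr] by simp
    then show False using neq j(1) unfolding c_def by blast
  qed
  have cyc: "\<And>j p. j \<le> m \<Longrightarrow> (par ^^ Suc p) (c j) = c j \<Longrightarrow> False"
    using cycle_root[OF R cN] cnr by blast
  have above: "\<And>j. 1 \<le> j \<Longrightarrow> j \<le> m \<Longrightarrow> above_v N par r col lo (c j) u"
  proof -
    fix j assume j: "1 \<le> j" "j \<le> m"
    have ncj: "n \<noteq> c j" using neq j unfolding c_def by auto
    have "\<not> desc par (c j) n"
    proof
      assume "desc par (c j) n"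
      then obtain k where k: "(par ^^ k) n = c j" unfolding desc_def by blast
      have "n = (par ^^ (Suc m - j)) (c j)" unfolding c_def using chain j
        by (metis funpow_add comp_apply le_add_diff_inverse2 le_SucI)
      then have "(par ^^ (k + (Suc m - j))) (c j) = c j" using k by (simp add: funpow_add)
      moreover have "k + (Suc m - j) = Suc (k + (m - j))" using j by simp
      ultimately show False using cyc[OF j(2)] by metis
    qed
    then show "above_v N par r col lo (c j) u" using colmem(1)[OF G nN uc] ncj by blast
  qed
  have belowc: "\<And>j d. 1 \<le> j \<Longrightarrow> j \<le> m \<Longrightarrow> d \<in> N \<Longrightarrow> desc par n' d \<Longrightarrow> d \<noteq> c j \<and> desc par (c j) d"
  proof -
    fix j d assume j: "1 \<le> j" "j \<le> m" and d: "d \<in> N" "desc par n' d"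
    obtain k where k: "(par ^^ k) d = n'" using d unfolding desc_def by blast
    have dk: "(par ^^ (j + k)) d = c j" unfolding c_def using k by (simp add: funpow_add)
    have "d \<noteq> c j"
    proof
      assume "d = c j"
      moreover have "j + k = Suc (j - 1 + k)" using j by simp
      ultimately show False using dk cyc[OF j(2)] by metis
    qed
    then show "d \<noteq> c j \<and> desc par (c j) d" using dk unfolding desc_def by blast
  qed
  have below: "\<And>j. 1 \<le> j \<Longrightarrow> j \<le> m \<Longrightarrow> below_v N par r col lo (c j) v"
  proof -
    fix j assume j: "1 \<le> j" "j \<le> m"
    from vs consider (a) d where "d \<in> N" "desc par n' d" "v \<in> col d"
      | (b) d where "d \<in> N - {r}" "desc par n' d" "v \<in> lo d"
      unfolding sub_vs_def by blast
    then show "below_v N par r col lo (c j) v"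
    proof cases
      case a then show ?thesis using belowc[OF j] unfolding below_v_def by blast
    next
      case b then show ?thesis using belowc[OF j] unfolding below_v_def by blast
    qed
  qed
  define K where "K = (\<lambda>j. {k. Suc k < length P \<and> P ! k \<in> col (c j)})"
  define f where "f = (\<lambda>k. wt (P ! k) (P ! Suc k))"
  have seg: "\<And>j. j \<in> {1..m} \<Longrightarrow> w \<le> sum f (K j)"
  proof -
    fix j assume "j \<in> {1..m}"
    then have j: "1 \<le> j" "j \<le> m" by auto
    show "w \<le> sum f (K j)" unfolding K_def f_def
      by (rule segment[OF G WG cN P]) (use above[OF j] below[OF j] hdP lastP in auto)
  qed
  have disj: "\<And>i j. i \<in> {1..m} \<Longrightarrow> j \<in> {1..m} \<Longrightarrow> i \<noteq> j \<Longrightarrow> K i \<inter> K j = {}"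
  proof -
    fix i j assume ij: "i \<in> {1..m}" "j \<in> {1..m}" "i \<noteq> j"
    have ne: "c i \<noteq> c j"
    proof
      assume eq: "c i = c j"
      show False
      proof (cases "i < j")
        case True
        have "(par ^^ (j - i)) (c i) = c j" unfolding c_def using True
          by (metis funpow_add comp_apply le_add_diff_inverse2 less_imp_le)
        moreover have "j - i = Suc (j - i - 1)" using True by simp
        ultimately show False using eq cyc[of i] ij by (metis atLeastAtMost_iff)
      next
        case False
        then have ji: "j < i" using ij by simp
        have "(par ^^ (i - j)) (c j) = c i" unfolding c_def using ji
          by (metis funpow_add comp_apply le_add_diff_inverse2 less_imp_le)
        moreover have "i - j = Suc (i - j - 1)" using ji by simp
        ultimately show False using eq cyc[of j] ij by (metis atLeastAtMost_iff)
      qed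
    qed
    have d1: "\<forall>c\<in>N. \<forall>d\<in>N. c \<noteq> d \<longrightarrow> col c \<inter> col d = {}"
      using G unfolding gridtree_def by blast
    have "col (c i) \<inter> col (c j) = {}" using d1 cN ne by blast
    then show "K i \<inter> K j = {}" unfolding K_def by blast
  qed
  have finK: "\<And>j. finite (K j)" unfolding K_def
    by (rule finite_subset[of _ "{..<length P}"]) auto
  have "real m * w = (\<Sum>j\<in>{1..m}. w)" by simp
  also have "\<dots> \<le> (\<Sum>j\<in>{1..m}. sum f (K j))" using seg by (rule sum_mono)
  also have "\<dots> = sum f (\<Union>j\<in>{1..m}. K j)"
    using finK disj by (intro sum.UNION_disjoint[symmetric]) auto
  also have "\<dots> \<le> sum f {..<length P - 1}"
  proof (rule sum_mono2)
    show "finite {..<length P - 1}" by simp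
    show "(\<Union>j\<in>{1..m}. K j) \<subseteq> {..<length P - 1}" unfolding K_def by auto
    fix b assume "b \<in> {..<length P - 1} - (\<Union>j\<in>{1..m}. K j)"
    then have "(P ! b, P ! Suc b) \<in> E" using P unfolding is_path_def by auto
    then show "0 \<le> f b" using WG unfolding wgraph_def f_def by (meson less_le)
  qed
  also have "\<dots> = path_len wt P" unfolding path_len_def f_def by simp
  finally show ?thesis .
qed

end
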